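(* Let $R=[0,1]^2$, $s\in\mathbb{N}$, $u=2^{-s}$, and let $(B_1,B_2)$ be a good box pair. Let $(p,q),(p',q')\in B_1\times B_2$ with $p<q$ and $p'<q'$, and let $\ell,\ell'$ be the lines through $p,q$ and through $p',q'$ respectively. With $\lambda_p,\lambda_q$ the parameters of $p,q$ along $\ell$ and $\lambda_{p'},\lambda_{q'}$ those of $p',q'$ along $\ell'$, we have $|\lambda_p-\lambda_{p'}|\le\sqrt2u+4\sqrt u$ and $|\lambda_q-\lambda_{q'}|\le\sqrt2u+4\sqrt u$. As a consequence, $L=O(\sqrt u)$.
   Context: For $p,q\in\mathbb{R}^2$ write $p\le q$ (resp. $p<q$) if both coordinates satisfy $\le$ (resp. $<$). $R$ is split into $2^s\times2^s$ congruent closed squares ("boxes") of side length $u$. A box pair is an ordered pair $(B_1,B_2)$ of boxes with centers $c_1,c_2$. Let $\mathcal{L}$ be the set of non-vertical lines in $\mathbb{R}^2$ with positive slope; each $\ell\in\mathcal{L}$ meets the line $y=-x$ in a unique point $b$ and is parametrized as $b+\lambda a$ with $a=(a_1,a_2)$ its unit direction vector with positive coordinates; $\hat{\ell}:=\min\{a_1,a_2\}$; for $p\in\ell$, $\lambda_p$ is the parameter with $p=b+\lambda_pa$. A line $\ell\in\mathcal{L}$ traverses $(B_1,B_2)$ if it meets both boxes; $\ell_c$ is the line through $c_1,c_2$. A box pair is null if $c_1\not\le c_2$; close if $c_1\le c_2$ and $\|c_1-c_2\|_2<\sqrt u$; non-diagonal if $c_1\le c_2$, $\|c_1-c_2\|_2\ge\sqrt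 u$, and every traversing $\ell\in\mathcal{L}$ satisfies $\hat{\ell}<u^{1/5}$; good if it is neither null, close, nor non-diagonal. $L_1$ is the supremum of $|\lambda_p-\lambda_{c_1}|$ over traversing lines $\ell$ and points $p\in\ell\cap B_1$ ($\lambda_p$ along $\ell$, $\lambda_{c_1}$ along $\ell_c$), $L_2$ likewise for $B_2$ and $c_2$, and $L:=\max\{L_1,L_2\}$. $O(\sqrt u)$ means bounded by an absolute constant times $\sqrt u$, uniformly over $s$ and good box pairs. *)

theory Defs
  imports "HOL-Analysis.Analysis"
begin

text \<open>Points of the plane are represented as real \<times> real (Euclidean norm/inner product).
  R = [0,1]^2 is split into 2^s \<times> 2^s boxes of side u = 2^(-s).\<close>

definition side :: "nat \<Rightarrow> real" where
  "side s = 1 / 2 ^ s"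

definition grid_box :: "nat \<Rightarrow> nat \<Rightarrow> nat \<Rightarrow> (real \<times> real) set" where
  "grid_box s i j = {real i * side s .. real (i+1) * side s} \<times> {real j * side s .. real (j+1) * side s}"

definition center :: "nat \<Rightarrow> nat \<Rightarrow> nat \<Rightarrow> real \<times> real" where
  "center s i j = ((real i + 1/2) * side s, (real j + 1/2) * side s)"

definition pleq :: "real \<times> real \<Rightarrow> real \<times> real \<Rightarrow> bool" where
  "pleq p q \<longleftrightarrow> fst p \<le> fst q \<and> snd p \<le> snd q"

definition pless :: "real \<times> real \<Rightarrow> real \<times> real \<Rightarrow> bool" where
  "pless p q \<longleftrightarrow> fst p < fst q \<and> snd p < snd q"

text \<open>A line is represented by its base point b on y = -x and unit direction a;
  the line is {b + \<lambda> a}. Lines in \<L>: a has positive coordinates.\<close>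
definition lineof :: "real \<times> real \<Rightarrow> real \<times> real \<Rightarrow> (real \<times> real) set" where
  "lineof b a = range (\<lambda>t. b + t *\<^sub>R a)"

definition inL :: "real \<times> real \<Rightarrow> real \<times> real \<Rightarrow> bool" where
  "inL b a \<longleftrightarrow> fst b = - snd b \<and> norm a = 1 \<and> 0 < fst a \<and> 0 < snd a"

text \<open>Same parametrization allowing nonnegative direction coordinates
  (needed for \<ell>_c, which may be vertical or horizontal).\<close>
definition inLc :: "real \<times> real \<Rightarrow> real \<times> real \<Rightarrow> bool" where
  "inLc b a \<longleftrightarrow> fst b = - snd b \<and> norm a = 1 \<and> 0 \<le> fst a \<and> 0 \<le> snd a"

text \<open>Parameter of a point p along the line (b,a): p = b + lam b a p *R a for p on the line.\<close>
definition lam :: "real \<times> real \<Rightarrow> real \<times> real \<Rightarrow> real \<times> real \<Rightarrow> real" where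
  "lam b a p = inner (p - b) a"

definition hat :: "real \<times> real \<Rightarrow> real" where
  "hat a = min (fst a) (snd a)"

definition traverses :: "(real \<times> real) set \<Rightarrow> (real \<times> real) set \<Rightarrow> real \<times> real \<Rightarrow> real \<times> real \<Rightarrow> bool" where
  "traverses B1 B2 b a \<longleftrightarrow> inL b a \<and> lineof b a \<inter> B1 \<noteq> {} \<and> lineof b a \<inter> B2 \<noteq> {}"

definition null_pair :: "nat \<Rightarrow> nat \<Rightarrow> nat \<Rightarrow> nat \<Rightarrow> nat \<Rightarrow> bool" where
  "null_pair s i1 j1 i2 j2 \<longleftrightarrow> \<not> pleq (center s i1 j1) (center s i2 j2)"

definition close_pair :: "nat \<Rightarrow> nat \<Rightarrow> nat \<Rightarrow> nat \<Rightarrow> nat \<Rightarrow> bool" where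
  "close_pair s i1 j1 i2 j2 \<longleftrightarrow> pleq (center s i1 j1) (center s i2 j2)
     \<and> dist (center s i1 j1) (center s i2 j2) < sqrt (side s)"

definition nondiag_pair :: "nat \<Rightarrow> nat \<Rightarrow> nat \<Rightarrow> nat \<Rightarrow> nat \<Rightarrow> bool" where
  "nondiag_pair s i1 j1 i2 j2 \<longleftrightarrow> pleq (center s i1 j1) (center s i2 j2)
     \<and> sqrt (side s) \<le> dist (center s i1 j1) (center s i2 j2)
     \<and> (\<forall>b a. traverses (grid_box s i1 j1) (grid_box s i2 j2) b a \<longrightarrow> hat a < side s powr (1/5))"

definition good_pair :: "nat \<Rightarrow> nat \<Rightarrow> nat \<Rightarrow> nat \<Rightarrow> nat \<Rightarrow> bool" where
  "good_pair s i1 j1 i2 j2 \<longleftrightarrow> \<not> null_pair s i1 j1 i2 j2 \<and> \<not> close_pair s i1 j1 i2 j2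
     \<and> \<not> nondiag_pair s i1 j1 i2 j2"

definition Lpart :: "(real \<times> real) set \<Rightarrow> (real \<times> real) set \<Rightarrow> real \<times> real \<Rightarrow> real \<times> real
     \<Rightarrow> (real \<times> real) set \<Rightarrow> real \<times> real \<Rightarrow> real" where
  "Lpart B1 B2 c1 c2 B c = Sup {\<bar>lam b a p - lam bc ac c\<bar> | b a p bc ac.
      traverses B1 B2 b a \<and> p \<in> lineof b a \<inter> B \<and>
      inLc bc ac \<and> c1 \<in> lineof bc ac \<and> c2 \<in> lineof bc ac}"

definition Lval :: "nat \<Rightarrow> nat \<Rightarrow> nat \<Rightarrow> nat \<Rightarrow> nat \<Rightarrow> real" where
  "Lval s i1 j1 i2 j2 =
     max (Lpart (grid_box s i1 j1) (grid_box s i2 j2) (center s i1 j1) (center s i2 j2)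
            (grid_box s i1 j1) (center s i1 j1))
         (Lpart (grid_box s i1 j1) (grid_box s i2 j2) (center s i1 j1) (center s i2 j2)
            (grid_box s i2 j2) (center s i2 j2))"

end

theory Submission
  imports Defs
begin

definition ff :: "real \<Rightarrow> real \<Rightarrow> real" where
  "ff v1 v2 = sqrt (v1^2 + v2^2) / (v1 + v2)"

lemma side_pos: "side s > 0" by (simp add: side_def)

lemma box_mem: "p \<in> grid_box s i j \<longleftrightarrow> real i * side s \<le> fst p \<and> fst p \<le> real (i+1) * side s
   \<and> real j * side s \<le> snd p \<and> snd p \<le> real (j+1) * side s"
  by (cases p) (auto simp: grid_box_def)

lemma box_le1: assumes "i < (2::nat)^s" shows "real (i+1) * side s \<le> 1"
proof -
  have "real (i+1) \<le> 2^s" using assms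
    by (metis Suc_eq_plus1 Suc_leI of_nat_le_iff of_nat_numeral of_nat_power)
  thus ?thesis by (simp add: side_def divide_simps)
qed

lemma norm_pair_sq: "(norm (a::real\<times>real))^2 = (fst a)^2 + (snd a)^2"
  by (simp add: norm_prod_def)

lemma inLc_sum: assumes "inLc b a" shows "fst a + snd a \<ge> 1" "(fst a)^2 + (snd a)^2 = 1"
proof -
  have n: "(fst a)^2 + (snd a)^2 = 1" using assms norm_pair_sq[of a] by (simp add: inLc_def)
  thus "(fst a)^2 + (snd a)^2 = 1" .
  have "0 \<le> fst a" "0 \<le> snd a" using assms by (auto simp: inLc_def)
  have "(fst a + snd a)^2 = 1 + 2*(fst a * snd a)" using n by (simp add: power2_eq_square algebra_simps)
  moreover have "fst a * snd a \<ge> 0" using \<open>0 \<le> fst a\<close> \<open>0 \<le> snd a\<close> by simp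
  ultimately have "(fst a + snd a)^2 \<ge> 1" by linarith
  show "fst a + snd a \<ge> 1"
  proof (rule ccontr)
    assume "\<not> fst a + snd a \<ge> 1"
    hence "(fst a + snd a)^2 < 1^2" using \<open>0 \<le> fst a\<close> \<open>0 \<le> snd a\<close>
      by (intro power_strict_mono) auto
    thus False using \<open>(fst a + snd a)^2 \<ge> 1\<close> by simp
  qed
qed

lemma inL_inLc: "inL b a \<Longrightarrow> inLc b a" by (auto simp: inL_def inLc_def)

lemma lam_eq: assumes "inLc b a" "x \<in> lineof b a"
  shows "lam b a x = (fst x + snd x) / (fst a + snd a)"
proof -
  obtain t where x: "x = b + t *\<^sub>R a" using assms(2) by (auto simp: lineof_def)
  have S: "fst a + snd a \<ge> 1" "(fst a)^2 + (snd a)^2 = 1" using inLc_sum[OF assms(1)] by auto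
  have "lam b a x = t * ((fst a)^2 + (snd a)^2)"
    by (simp add: lam_def x inner_prod_def power2_eq_square algebra_simps)
  hence "lam b a x = t" using S(2) by simp
  moreover have "fst x + snd x = t * (fst a + snd a)"
    using assms(1) by (simp add: x inLc_def algebra_simps)
  ultimately show ?thesis using S(1) by simp
qed

lemma dir_eq: assumes "inLc b a" "x \<in> lineof b a" "y \<in> lineof b a"
  "fst y - fst x \<ge> 0" "snd y - snd x \<ge> 0" "(fst y - fst x) + (snd y - snd x) > 0"
  shows "1 / (fst a + snd a) = ff (fst y - fst x) (snd y - snd x)"
proof -
  obtain t1 where x: "x = b + t1 *\<^sub>R a" using assms(2) by (auto simp: lineof_def)
  obtain t2 where y: "y = b + t2 *\<^sub>R a" using assms(3) by (auto simp: lineof_def)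
  have S: "fst a + snd a \<ge> 1" "(fst a)^2 + (snd a)^2 = 1" using inLc_sum[OF assms(1)] by auto
  have v1: "fst y - fst x = (t2 - t1) * fst a" and v2: "snd y - snd x = (t2 - t1) * snd a"
    by (simp_all add: x y algebra_simps)
  have sum: "(fst y - fst x) + (snd y - snd x) = (t2 - t1) * (fst a + snd a)"
    by (simp add: v1 v2 algebra_simps)
  hence tp: "t2 - t1 > 0" using assms(6) S(1)
    by (smt (verit) mult_nonpos_nonneg)
  have "(fst y - fst x)^2 + (snd y - snd x)^2 = (t2 - t1)^2 * ((fst a)^2 + (snd a)^2)"
    unfolding v1 v2 by (simp add: power2_eq_square algebra_simps)
  hence "(fst y - fst x)^2 + (snd y - snd x)^2 = (t2 - t1)^2" using S(2) by simp
  hence "sqrt ((fst y - fst x)^2 + (snd y - snd x)^2) = t2 - t1" using tp by simp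
  thus ?thesis unfolding ff_def sum using tp by simp
qed

lemma ff_tau: assumes "v1 \<ge> 0" "v2 \<ge> 0" "v1 + v2 > 0"
  shows "ff v1 v2 = sqrt ((1 + ((v1 - v2)/(v1 + v2))^2) / 2)"
proof -
  have "sqrt (v1^2 + v2^2) / (v1 + v2) = sqrt ((v1^2 + v2^2) / (v1 + v2)^2)"
    using assms by (simp add: real_sqrt_divide)
  also have "(v1^2 + v2^2) / (v1 + v2)^2 = (1 + ((v1 - v2)/(v1 + v2))^2) / 2"
  proof -
    define V where "V = v1 + v2"
    have V0: "V \<noteq> 0" using assms V_def by simp
    have e1: "(1 + ((v1 - v2)/V)^2) / 2 = (V^2 + (v1 - v2)^2) / (2 * V^2)"
      using V0 by (simp add: power_divide add_divide_distrib divide_divide_eq_left)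
    have e2: "V^2 + (v1 - v2)^2 = 2 * (v1^2 + v2^2)" unfolding V_def by (simp add: power2_eq_square algebra_simps)
    have e3: "(2 * (v1^2 + v2^2)) / (2 * V^2) = (v1^2 + v2^2) / V^2"
      by (rule mult_divide_mult_cancel_left) simp
    show ?thesis unfolding V_def[symmetric] e1 e2 e3 by (rule refl)
  qed
  finally show ?thesis by (simp add: ff_def)
qed

lemma tau_le1: fixes v1 v2 :: real assumes "v1 \<ge> 0" "v2 \<ge> 0" "v1 + v2 > 0"
  shows "\<bar>(v1 - v2)/(v1 + v2)\<bar> \<le> 1"
proof -
  have "(v1 - v2)/(v1 + v2) \<le> 1" using assms by (simp add: pos_divide_le_eq)
  moreover have "-1 \<le> (v1 - v2)/(v1 + v2)" using assms by (simp add: pos_le_divide_eq)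
  ultimately show ?thesis unfolding abs_le_iff by linarith
qed

lemma g_lip: fixes a b :: real assumes "\<bar>a\<bar> \<le> 1" "\<bar>b\<bar> \<le> 1"
  shows "\<bar>sqrt ((1 + a^2)/2) - sqrt ((1 + b^2)/2)\<bar> \<le> \<bar>a - b\<bar> / 2"
proof -
  define A where "A = sqrt ((1 + a^2)/2)"
  define B where "B = sqrt ((1 + b^2)/2)"
  have a2: "a^2 \<le> 1" using assms(1) by (simp add: abs_square_le_1)
  have b2: "b^2 \<le> 1" using assms(2) by (simp add: abs_square_le_1)
  have aA: "\<bar>a\<bar> \<le> A" unfolding A_def by (rule real_le_rsqrt) (use a2 in simp)
  have bB: "\<bar>b\<bar> \<le> B" unfolding B_def by (rule real_le_rsqrt) (use b2 in simp)
  have Ap: "A > 0" unfolding A_def by (simp add: add_pos_nonneg)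
  have Bp: "B > 0" unfolding B_def by (simp add: add_pos_nonneg)
  have AA: "A^2 = (1 + a^2)/2" unfolding A_def by (simp add: add_nonneg_nonneg)
  have BB: "B^2 = (1 + b^2)/2" unfolding B_def by (simp add: add_nonneg_nonneg)
  have "(A - B) * (A + B) = (a - b) * (a + b) / 2"
    using AA BB by (simp add: power2_eq_square algebra_simps)
  hence "\<bar>A - B\<bar> * (A + B) = \<bar>a - b\<bar> * \<bar>a + b\<bar> / 2"
    using Ap Bp by (metis abs_divide abs_mult abs_of_pos add_pos_pos abs_numeral)
  also have "\<dots> \<le> \<bar>a - b\<bar> * (A + B) / 2"
    using aA bB abs_triangle_ineq[of a b]
    by (intro divide_right_mono mult_left_mono) auto
  finally have "\<bar>A - B\<bar> * (A + B) \<le> \<bar>a - b\<bar> / 2 * (A + B)" by simp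
  hence "\<bar>A - B\<bar> \<le> \<bar>a - b\<bar> / 2" using Ap Bp
    by (meson add_pos_pos mult_le_cancel_right_pos)
  thus ?thesis unfolding A_def B_def .
qed

lemma aux_cancel: fixes V W e :: real assumes "V > 0" shows "2 * (e * V) / (V * W) = 2 * (e / W)"
  using assms by (cases "W = 0") (simp_all add: field_simps)

lemma tau_lip: fixes v1 v2 w1 w2 e :: real
  assumes "v1 \<ge> 0" "v2 \<ge> 0" "v1 + v2 > 0" "w1 \<ge> 0" "w2 \<ge> 0" "w1 + w2 > 0"
    "\<bar>v1 - w1\<bar> \<le> e" "\<bar>v2 - w2\<bar> \<le> e"
  shows "\<bar>(v1 - v2)/(v1 + v2) - (w1 - w2)/(w1 + w2)\<bar> \<le> 2 * (e / (w1 + w2))"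
proof -
  define D where "D = v1 * (w2 - v2) - v2 * (w1 - v1)"
  have eq: "(v1 - v2)/(v1 + v2) - (w1 - w2)/(w1 + w2)
      = 2 * D / ((v1 + v2) * (w1 + w2))"
    using assms(3,6) unfolding D_def by (simp add: field_simps)
  have "\<bar>v1 * (w2 - v2) - v2 * (w1 - v1)\<bar> \<le> \<bar>v1 * (w2 - v2)\<bar> + \<bar>v2 * (w1 - v1)\<bar>"
    by (rule abs_triangle_ineq4)
  also have "\<dots> = v1 * \<bar>w2 - v2\<bar> + v2 * \<bar>w1 - v1\<bar>" using assms(1,2) by (simp add: abs_mult)
  also have "\<dots> \<le> v1 * e + v2 * e"
    using assms by (intro add_mono mult_left_mono) (auto simp: abs_minus_commute)
  finally have c: "\<bar>D\<bar> \<le> e * (v1 + v2)" unfolding D_def by (simp add: algebra_simps)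
  have "\<bar>(v1 - v2)/(v1 + v2) - (w1 - w2)/(w1 + w2)\<bar>
      = 2 * \<bar>D\<bar> / ((v1 + v2) * (w1 + w2))"
    unfolding eq using assms(3,6) by (simp add: abs_mult abs_divide)
  also have "\<dots> \<le> 2 * (e * (v1 + v2)) / ((v1 + v2) * (w1 + w2))"
    using c assms(3,6) by (intro divide_right_mono mult_left_mono) auto
  also have "\<dots> = 2 * (e / (w1 + w2))" using assms(3) by (rule aux_cancel)
  finally show ?thesis .
qed

lemma ff_lip: fixes v1 v2 w1 w2 e :: real
  assumes "v1 \<ge> 0" "v2 \<ge> 0" "v1 + v2 > 0" "w1 \<ge> 0" "w2 \<ge> 0" "w1 + w2 > 0"
    "\<bar>v1 - w1\<bar> \<le> e" "\<bar>v2 - w2\<bar> \<le> e"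
  shows "\<bar>ff v1 v2 - ff w1 w2\<bar> \<le> e / (w1 + w2)"
proof -
  have "\<bar>ff v1 v2 - ff w1 w2\<bar> \<le> \<bar>(v1 - v2)/(v1 + v2) - (w1 - w2)/(w1 + w2)\<bar> / 2"
    unfolding ff_tau[OF assms(1-3)] ff_tau[OF assms(4-6)]
    by (rule g_lip[OF tau_le1[OF assms(1-3)] tau_le1[OF assms(4-6)]])
  also have "\<dots> \<le> (2 * (e / (w1 + w2))) / 2"
    using tau_lip[OF assms] by (intro divide_right_mono) auto
  also have "(2 * (e / (w1 + w2))) / 2 = e / (w1 + w2)" by (rule nonzero_mult_div_cancel_left) simp
  finally show ?thesis .
qed

lemma ff_bounds: fixes v1 v2 :: real assumes "v1 \<ge> 0" "v2 \<ge> 0" "v1 + v2 > 0"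
  shows "ff v1 v2 \<le> 1" "1 / sqrt 2 \<le> ff v1 v2" "ff v1 v2 > 0"
proof -
  have "sqrt (v1^2 + v2^2) \<le> v1 + v2"
    using assms by (intro real_le_lsqrt) (auto simp: power2_eq_square algebra_simps)
  thus "ff v1 v2 \<le> 1" using assms by (simp add: ff_def)
  have h: "0 \<le> (v1 - v2)^2" by simp
  have "(v1 + v2)^2 \<le> 2 * (v1^2 + v2^2)"
    using h by (simp add: power2_eq_square algebra_simps)
  hence "v1 + v2 \<le> sqrt (2 * (v1^2 + v2^2))" by (rule real_le_rsqrt)
  hence "v1 + v2 \<le> sqrt 2 * sqrt (v1^2 + v2^2)" by (simp only: real_sqrt_mult)
  thus "1 / sqrt 2 \<le> ff v1 v2" using assms by (simp add: ff_def field_simps)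
  have "v1^2 + v2^2 > 0" using assms
    by (metis add_nonneg_nonneg add_pos_nonneg le_less not_less sum_power2_gt_zero_iff zero_le_power2 add.commute)
  thus "ff v1 v2 > 0" using assms by (simp add: ff_def)
qed

lemma h5: fixes u :: real assumes "u > 0" shows "(u powr (1/5)) ^ 5 = u"
  using assms by (simp add: powr_power)

lemma sqrt2_bounds: "1.414 \<le> sqrt 2" "sqrt 2 \<le> 1.4143" "1 / sqrt 2 = sqrt 2 / 2"
proof -
  show "1.414 \<le> sqrt 2" by (rule real_le_rsqrt) (simp add: power2_eq_square)
  show "sqrt 2 \<le> 1.4143" by (rule real_le_lsqrt) (simp_all add: power2_eq_square)
  show "1 / sqrt 2 = sqrt 2 / 2" by (simp add: divide_simps)
qed

lemma num_small: fixes u :: real assumes "1/32 \<le> u" "u \<le> 1/8"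
  shows "2 * u + 2 * (1 - 1 / sqrt 2) \<le> sqrt 2 * u + 4 * sqrt u"
proof -
  have su: "0.1767 \<le> sqrt u" by (rule real_le_rsqrt) (use assms in \<open>simp add: power2_eq_square\<close>)
  have "2 * u + 2 * (1 - 1 / sqrt 2) = 2 * u + 2 - sqrt 2" unfolding sqrt2_bounds(3) by simp
  also have "\<dots> \<le> sqrt 2 * u + 4 * sqrt u"
  proof -
    have "(2 - sqrt 2) * u \<le> 0.586 * (1/8)"
      using sqrt2_bounds(1) assms by (intro mult_mono) auto
    thus ?thesis using su sqrt2_bounds(1) by (simp add: algebra_simps)
  qed
  finally show ?thesis .
qed

lemma num_small2: fixes u :: real assumes "1/32 \<le> u" shows "2 \<le> 12 * sqrt u"
proof -
  have su: "0.1767 \<le> sqrt u" by (rule real_le_rsqrt) (use assms in \<open>simp add: power2_eq_square\<close>)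
  thus ?thesis by simp
qed

lemma aux_lin: fixes X Y Q Z :: real shows "Z \<le> Q \<Longrightarrow> X - Y = Q - Z \<Longrightarrow> Y \<le> X" by linarith

lemma num_large: fixes r A W :: real
  assumes r0: "r > 0" and r8: "r \<le> 1/8" and A3: "A \<ge> 3" and AN: "(A - 3)^2 \<ge> 1/r^2 - 9"
    and WA: "W \<ge> (A - 2) * r^2"
  shows "2 * r^2 + 2 * (2 * r^2 / W) \<le> sqrt 2 * r^2 + 4 * r"
proof -
  define n where "n = 1 / r"
  have nr: "n * r = 1" using r0 by (simp add: n_def)
  have n8: "n \<ge> 8" using r0 r8 by (simp add: n_def divide_simps)
  have nsq: "1/r^2 = n^2" by (simp add: n_def power_divide)
  have An: "A - 3 \<ge> n - 0.84"
  proof (rule ccontr)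
    assume "\<not> A - 3 \<ge> n - 0.84"
    hence "(A - 3)^2 < (n - 0.84)^2" using A3 by (intro power_strict_mono) auto
    also have "\<dots> = n^2 - 1.68 * n + 0.7056" by (simp add: power2_eq_square algebra_simps)
    also have "\<dots> < n^2 - 9" using n8 by simp
    finally show False using AN nsq by simp
  qed
  have Wlb: "W \<ge> r + 0.16 * r^2"
  proof -
    have "(A - 2) * r^2 \<ge> (n + 0.16) * r^2" using An by (intro mult_right_mono) auto
    also have "(n + 0.16) * r^2 = (n * r) * r + 0.16 * r^2" by (simp add: power2_eq_square algebra_simps)
    finally show ?thesis using WA nr by simp
  qed
  have Wp: "r + 0.16 * r^2 > 0" using r0 by (simp add: add_pos_nonneg)
  have "2 * r^2 / W \<le> 2 * r^2 / (r + 0.16 * r^2)"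
    using Wlb Wp by (intro divide_left_mono) auto
  also have "2 * r^2 / (r + 0.16 * r^2) = (r * (2 * r)) / (r * (1 + 0.16 * r))"
    by (simp add: power2_eq_square algebra_simps)
  also have "\<dots> = 2 * r / (1 + 0.16 * r)"
    using r0 by (simp only: mult_divide_mult_cancel_left_if) simp
  finally have t: "2 * (2 * r^2 / W) \<le> 4 * r / (1 + 0.16 * r)" by simp
  have key: "(2 - sqrt 2) * (1 + 0.16 * r) \<le> 0.64"
  proof -
    have "(2 - sqrt 2) * (1 + 0.16 * r) \<le> 0.586 * (1 + 0.16 * (1/8))"
      using sqrt2_bounds(1) r0 r8 by (intro mult_mono) auto
    thus ?thesis by simp
  qed
  have "2 * r^2 + 4 * r / (1 + 0.16 * r) \<le> sqrt 2 * r^2 + 4 * r"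
  proof -
    have p: "1 + 0.16 * r > 0" using r0 by simp
    have "(2 * r^2 + 4 * r / (1 + 0.16 * r)) * (1 + 0.16 * r) = 2 * r^2 * (1 + 0.16 * r) + 4 * r"
      using p by (simp add: field_simps)
    also have "\<dots> \<le> (sqrt 2 * r^2 + 4 * r) * (1 + 0.16 * r)"
    proof -
      have "(2 - sqrt 2) * (1 + 0.16 * r) * r^2 \<le> 0.64 * r^2"
        using key by (intro mult_right_mono) auto
      moreover have "(sqrt 2 * r^2 + 4 * r) * (1 + 0.16 * r) - (2 * r^2 * (1 + 0.16 * r) + 4 * r)
          = 0.64 * r^2 - (2 - sqrt 2) * (1 + 0.16 * r) * r^2"
        by (simp add: field_simps power2_eq_square)
      ultimately show ?thesis by (rule aux_lin)
    qed
    finally show ?thesis using p by (simp add: mult_le_cancel_right_pos)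
  qed
  with t show ?thesis by linarith
qed

lemma side_pow: "side s = 1 / 2^s" by (simp add: side_def)

lemma good_basic:
  assumes "good_pair s i1 j1 i2 j2"
  shows "i1 \<le> i2" "j1 \<le> j2" "2^s \<le> (real i2 - real i1)^2 + (real j2 - real j1)^2"
    "\<exists>b a. traverses (grid_box s i1 j1) (grid_box s i2 j2) b a \<and> side s powr (1/5) \<le> hat a"
proof -
  have u0: "side s > 0" by (rule side_pos)
  have pl: "pleq (center s i1 j1) (center s i2 j2)" using assms by (simp add: good_pair_def null_pair_def)
  hence "(real i1 + 1/2) * side s \<le> (real i2 + 1/2) * side s"
        "(real j1 + 1/2) * side s \<le> (real j2 + 1/2) * side s"
    by (simp_all add: pleq_def center_def)
  hence "real i1 + 1/2 \<le> real i2 + 1/2" "real j1 + 1/2 \<le> real j2 + 1/2"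
    using u0 mult_le_cancel_right_pos by blast+
  thus "i1 \<le> i2" "j1 \<le> j2" by simp_all
  have d: "sqrt (side s) \<le> dist (center s i1 j1) (center s i2 j2)"
    using assms pl by (auto simp: good_pair_def close_pair_def)
  have "dist (center s i1 j1) (center s i2 j2)
      = sqrt (((real i2 - real i1) * side s)^2 + ((real j2 - real j1) * side s)^2)"
  proof -
    have "dist (center s i1 j1) (center s i2 j2) = sqrt ((dist ((real i1 + 1/2) * side s) ((real i2 + 1/2) * side s))^2
       + (dist ((real j1 + 1/2) * side s) ((real j2 + 1/2) * side s))^2)"
      unfolding center_def by (rule dist_Pair_Pair)
    also have "(dist ((real i1 + 1/2) * side s) ((real i2 + 1/2) * side s))^2 = ((real i2 - real i1) * side s)^2"
      by (simp add: dist_real_def power2_eq_square algebra_simps)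
    also have "(dist ((real j1 + 1/2) * side s) ((real j2 + 1/2) * side s))^2 = ((real j2 - real j1) * side s)^2"
      by (simp add: dist_real_def power2_eq_square algebra_simps)
    finally show ?thesis .
  qed
  with d have "side s \<le> ((real i2 - real i1) * side s)^2 + ((real j2 - real j1) * side s)^2"
    by simp
  hence "side s * 1 \<le> side s * (((real i2 - real i1)^2 + (real j2 - real j1)^2) * side s)"
    by (simp add: power2_eq_square algebra_simps)
  hence "1 \<le> ((real i2 - real i1)^2 + (real j2 - real j1)^2) * side s"
    using u0 mult_le_cancel_left_pos by blast
  thus "2^s \<le> (real i2 - real i1)^2 + (real j2 - real j1)^2"
    by (simp add: side_pow divide_simps)
  show "\<exists>b a. traverses (grid_box s i1 j1) (grid_box s i2 j2) b a \<and> side s powr (1/5) \<le> hat a"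
    using assms pl d by (auto simp: good_pair_def nondiag_pair_def not_less)
qed

lemma good_s3: assumes "good_pair s i1 j1 i2 j2" shows "s \<ge> 3"
proof (rule ccontr)
  assume "\<not> s \<ge> 3"
  hence s2: "s \<le> 2" by simp
  obtain b a where tr: "traverses (grid_box s i1 j1) (grid_box s i2 j2) b a"
    and h: "side s powr (1/5) \<le> hat a" using good_basic(4)[OF assms] by blast
  have iL: "inL b a" using tr by (simp add: traverses_def)
  have n: "(fst a)^2 + (snd a)^2 = 1" using inLc_sum(2)[OF inL_inLc[OF iL]] .
  define h where "h = side s powr (1/5)"
  have hp: "h > 0" using side_pos[of s] by (simp add: h_def)
  have h1: "h \<le> fst a" "h \<le> snd a" using h by (auto simp: h_def hat_def)
  have "h^2 \<le> (fst a)^2" "h^2 \<le> (snd a)^2" using h1 hp by (auto intro: power_mono)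
  hence hh: "h^2 \<le> 1/2" using n by simp
  have "(h^2)^5 \<le> (1/2)^5" using hh hp by (intro power_mono) auto
  moreover have "(h^2)^5 = (h^5)^2" by (simp flip: power_mult add: mult.commute)
  moreover have "h^5 = side s" unfolding h_def by (rule h5[OF side_pos])
  ultimately have "(side s)^2 \<le> (1/2)^5" by simp
  moreover have "(1/2::real)^5 = 1/32" by (simp add: power_divide)
  ultimately have "(side s)^2 \<le> 1/32" by simp
  moreover have "side s \<ge> 1/4"
  proof -
    have "(2::real)^s \<le> 2^2" using s2 by (intro power_increasing) auto
    thus ?thesis by (simp add: side_pow divide_simps)
  qed
  moreover have "(1/4::real)^2 \<le> (side s)^2" using \<open>side s \<ge> 1/4\<close> by (intro power_mono) auto
  ultimately show False by (simp add: power_divide)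
qed

lemma min3_abs: fixes a1 a2 h N K M t :: real
  assumes a1: "a1 > 0" and a2: "a2 > 0" and n: "a1^2 + a2^2 = 1" and ha: "h \<le> a2" and hp: "h > 0"
    and h5: "h^5 = 1/N" and N: "N \<ge> 64" and g1: "t * a1 \<ge> (K - 1) / N" and g2: "t * a2 \<le> (M + 1) / N"
    and KM: "K^2 + M^2 \<ge> N" and M0: "0 \<le> M" and M2: "M \<le> 2" and K0: "0 \<le> K"
  shows False
proof -
  have "M^2 \<le> 2^2" using M0 M2 by (intro power_mono) auto
  hence K2: "K^2 \<ge> N - 4" using KM by simp
  have K7: "K \<ge> 7"
  proof (rule ccontr)
    assume "\<not> K \<ge> 7"
    hence "K^2 < 7^2" using K0 by (intro power_strict_mono) auto
    thus False using K2 N by simp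
  qed
  have Np: "N > 0" using N by simp
  have "t * a1 > 0" using g1 K7 Np by (smt (verit) divide_pos_pos)
  hence tp: "t > 0" using a1 by (simp add: zero_less_mult_iff)
  have "(K - 1) / N * a2 \<le> t * a1 * a2" using g1 a2 by (intro mult_right_mono) auto
  also have "t * a1 * a2 = (t * a2) * a1" by simp
  also have "\<dots> \<le> 3 / N * a1"
  proof -
    have "(M + 1) / N \<le> 3 / N" using M2 Np by (intro divide_right_mono) auto
    hence "t * a2 \<le> 3 / N" using g2 by linarith
    thus ?thesis using a1 by (intro mult_right_mono) auto
  qed
  finally have "(K - 1) * a2 / N \<le> 3 * a1 / N" by simp
  hence ka: "(K - 1) * a2 \<le> 3 * a1" using Np by (simp add: divide_le_cancel)
  have "((K - 1) * a2)^2 \<le> (3 * a1)^2" using ka K7 a2 by (intro power_mono) auto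
  hence "(K - 1)^2 * a2^2 \<le> 9 * a1^2" by (simp add: power_mult_distrib)
  hence Y: "((K - 1)^2 + 9) * a2^2 \<le> 9" using n by (simp add: algebra_simps)
  have Yl: "(K - 1)^2 + 9 \<ge> 3 * N / 4"
  proof -
    have "0 \<le> (K - 4)^2 + 12" by simp
    thus ?thesis using K2 by (simp add: power2_eq_square algebra_simps)
  qed
  have "3 * N / 4 * a2^2 \<le> 9" using Y Yl by (smt (verit) mult_right_mono zero_le_power2)
  hence a22: "a2^2 \<le> 12 / N" using Np by (simp add: field_simps)
  have "h^2 \<le> a2^2" using ha hp by (intro power_mono) auto
  hence "(h^2)^5 \<le> (12 / N)^5" using a22 hp by (intro power_mono) auto
  moreover have "(h^2)^5 = (h^5)^2" by (simp flip: power_mult add: mult.commute)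
  ultimately have "(1/N)^2 \<le> (12/N)^5" using h5 by simp
  hence "1 / N^2 \<le> 248832 / N^5" by (simp add: power_divide)
  hence N5: "N^5 \<le> 248832 * N^2" using Np by (simp add: field_simps)
  have e5: "N^5 = N^3 * N^2" by (simp flip: power_add)
  have "N^3 * N^2 \<le> 248832 * N^2" using N5 unfolding e5 .
  moreover have "N^2 > 0" using Np by simp
  ultimately have "N^3 \<le> 248832" using mult_le_cancel_right_pos by blast
  moreover have "N^3 \<ge> 64^3" using N by (intro power_mono) auto
  ultimately show False by simp
qed

lemma good_min3: assumes g: "good_pair s i1 j1 i2 j2" and s6: "s \<ge> 6"
  shows "3 \<le> real i2 - real i1" "3 \<le> real j2 - real j1"
proof -
  have ij: "i1 \<le> i2" "j1 \<le> j2" using good_basic(1,2)[OF g] by auto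
  have KM: "2^s \<le> (real i2 - real i1)^2 + (real j2 - real j1)^2" using good_basic(3)[OF g] .
  obtain b a where tr: "traverses (grid_box s i1 j1) (grid_box s i2 j2) b a"
    and h: "side s powr (1/5) \<le> hat a" using good_basic(4)[OF g] by blast
  have iL: "inL b a" using tr by (simp add: traverses_def)
  have a1: "fst a > 0" and a2: "snd a > 0" using iL by (auto simp: inL_def)
  have n: "(fst a)^2 + (snd a)^2 = 1" using inLc_sum(2)[OF inL_inLc[OF iL]] .
  obtain x where x: "x \<in> lineof b a" "x \<in> grid_box s i1 j1" using tr by (auto simp: traverses_def)
  obtain y where y: "y \<in> lineof b a" "y \<in> grid_box s i2 j2" using tr by (auto simp: traverses_def)
  obtain t1 where xt: "x = b + t1 *\<^sub>R a" using x(1) by (auto simp: lineof_def)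
  obtain t2 where yt: "y = b + t2 *\<^sub>R a" using y(1) by (auto simp: lineof_def)
  define N :: real where "N = 2^s"
  have N64: "N \<ge> 64"
  proof -
    have "(2::real)^6 \<le> 2^s" using s6 by (intro power_increasing) auto
    thus ?thesis by (simp add: N_def)
  qed
  have sN: "side s = 1 / N" by (simp add: N_def side_pow)
  define hh where "hh = side s powr (1/5)"
  have hp: "hh > 0" using side_pos[of s] by (simp add: hh_def)
  have h5': "hh^5 = 1 / N" unfolding hh_def h5[OF side_pos] by (rule sN)
  have ha: "hh \<le> fst a" "hh \<le> snd a" using h by (auto simp: hh_def hat_def)
  have g1: "(t2 - t1) * fst a = fst y - fst x" by (simp add: xt yt algebra_simps)
  have g2: "(t2 - t1) * snd a = snd y - snd x" by (simp add: xt yt algebra_simps)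
  have bx: "real i1 / N \<le> fst x" "fst x \<le> (1 + real i1) / N" "real j1 / N \<le> snd x" "snd x \<le> (1 + real j1) / N"
    using x(2) unfolding box_mem sN by auto
  have by': "real i2 / N \<le> fst y" "fst y \<le> (1 + real i2) / N" "real j2 / N \<le> snd y" "snd y \<le> (1 + real j2) / N"
    using y(2) unfolding box_mem sN by auto
  have G1l: "(t2 - t1) * fst a \<ge> ((real i2 - real i1) - 1) / N"
    using bx by' unfolding g1 by (simp add: diff_divide_distrib add_divide_distrib)
  have G1u: "(t2 - t1) * fst a \<le> ((real i2 - real i1) + 1) / N"
    using bx by' unfolding g1 by (simp add: diff_divide_distrib add_divide_distrib)
  have G2l: "(t2 - t1) * snd a \<ge> ((real j2 - real j1) - 1) / N"
    using bx by' unfolding g2 by (simp add: diff_divide_distrib add_divide_distrib)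
  have G2u: "(t2 - t1) * snd a \<le> ((real j2 - real j1) + 1) / N"
    using bx by' unfolding g2 by (simp add: diff_divide_distrib add_divide_distrib)
  have K0: "0 \<le> real i2 - real i1" and M0: "0 \<le> real j2 - real j1" using ij by auto
  show "3 \<le> real j2 - real j1"
  proof (rule ccontr)
    assume "\<not> 3 \<le> real j2 - real j1"
    hence "j2 \<le> j1 + 2" by linarith
    hence M2: "real j2 - real j1 \<le> 2" by linarith
    show False
      by (rule min3_abs[OF a1 a2 n ha(2) hp h5' N64 G1l G2u _ M0 M2 K0]) (use KM N_def in simp)
  qed
  show "3 \<le> real i2 - real i1"
  proof (rule ccontr)
    assume "\<not> 3 \<le> real i2 - real i1"
    hence "i2 \<le> i1 + 2" by linarith
    hence K2: "real i2 - real i1 \<le> 2" by linarith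
    have n': "(snd a)^2 + (fst a)^2 = 1" using n by simp
    show False
      by (rule min3_abs[OF a2 a1 n' ha(1) hp h5' N64 G2l G1u _ K0 K2 M0]) (use KM N_def in simp)
  qed
qed

lemma comb: fixes X X' f f' d e :: real
  assumes "\<bar>X - X'\<bar> \<le> d" "0 \<le> X'" "X' \<le> 2" "0 < f" "f \<le> 1" "\<bar>f - f'\<bar> \<le> e"
  shows "\<bar>X * f - X' * f'\<bar> \<le> d + 2 * e"
proof -
  have "X * f - X' * f' = (X - X') * f + X' * (f - f')" by (simp add: algebra_simps)
  hence "\<bar>X * f - X' * f'\<bar> \<le> \<bar>(X - X') * f\<bar> + \<bar>X' * (f - f')\<bar>"
    by (simp only: abs_triangle_ineq)
  also have "\<bar>(X - X') * f\<bar> + \<bar>X' * (f - f')\<bar> = \<bar>X - X'\<bar> * f + X' * \<bar>f - f'\<bar>"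
    using assms(2,4) by (simp add: abs_mult)
  also have "\<dots> \<le> d * 1 + 2 * e"
    using assms by (intro add_mono mult_mono) auto
  finally show ?thesis by simp
qed

lemma core_bound:
  fixes s :: nat and X X' v1 v2 w1 w2 K M :: real
  assumes s3: "s \<ge> 3" and dX: "\<bar>X - X'\<bar> \<le> 2 * side s" and X0: "0 \<le> X'" and X2: "X' \<le> 2"
    and v: "v1 \<ge> 0" "v2 \<ge> 0" "v1 + v2 > 0" and w: "w1 \<ge> 0" "w2 \<ge> 0" "w1 + w2 > 0"
    and d1: "\<bar>v1 - w1\<bar> \<le> 2 * side s" and d2: "\<bar>v2 - w2\<bar> \<le> 2 * side s"
    and big: "s \<ge> 6 \<Longrightarrow> 3 \<le> K \<and> 3 \<le> M \<and> 2^s \<le> K^2 + M^2 \<and> (K + M - 2) * side s \<le> w1 + w2"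
  shows "\<bar>X * ff v1 v2 - X' * ff w1 w2\<bar> \<le> sqrt 2 * side s + 4 * sqrt (side s)"
proof (cases "s \<le> 5")
  case True
  have fv: "ff v1 v2 \<le> 1" "1 / sqrt 2 \<le> ff v1 v2" "ff v1 v2 > 0" using ff_bounds[OF v] by auto
  have fw: "ff w1 w2 \<le> 1" "1 / sqrt 2 \<le> ff w1 w2" using ff_bounds[OF w] by auto
  have "\<bar>ff v1 v2 - ff w1 w2\<bar> \<le> 1 - 1 / sqrt 2" using fv fw by (simp add: abs_le_iff)
  hence "\<bar>X * ff v1 v2 - X' * ff w1 w2\<bar> \<le> 2 * side s + 2 * (1 - 1 / sqrt 2)"
    using comb[OF dX X0 X2 fv(3) fv(1)] by blast
  also have "\<dots> \<le> sqrt 2 * side s + 4 * sqrt (side s)"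
  proof (rule num_small)
    have "(2::real)^s \<le> 2^5" using True by (intro power_increasing) auto
    thus "1/32 \<le> side s" by (simp add: side_pow divide_simps)
    have "(2::real)^3 \<le> 2^s" using s3 by (intro power_increasing) auto
    thus "side s \<le> 1/8" by (simp add: side_pow divide_simps)
  qed
  finally show ?thesis .
next
  case False
  hence s6: "s \<ge> 6" by simp
  have B: "3 \<le> K" "3 \<le> M" "2^s \<le> K^2 + M^2" "(K + M - 2) * side s \<le> w1 + w2" using big[OF s6] by auto
  have fv: "ff v1 v2 \<le> 1" "ff v1 v2 > 0" using ff_bounds[OF v] by auto
  have "\<bar>ff v1 v2 - ff w1 w2\<bar> \<le> 2 * side s / (w1 + w2)"
    by (rule ff_lip[OF v w d1 d2])
  hence "\<bar>X * ff v1 v2 - X' * ff w1 w2\<bar> \<le> 2 * side s + 2 * (2 * side s / (w1 + w2))"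
    using comb[OF dX X0 X2 fv(2) fv(1)] by blast
  also have "\<dots> \<le> sqrt 2 * side s + 4 * sqrt (side s)"
  proof -
    define r where "r = sqrt (side s)"
    have r0: "r > 0" using side_pos[of s] by (simp add: r_def)
    have rr: "r^2 = side s" using side_pos[of s] by (simp add: r_def)
    have u64: "side s \<le> 1/64"
    proof -
      have "(2::real)^6 \<le> 2^s" using s6 by (intro power_increasing) auto
      thus ?thesis by (simp add: side_pow divide_simps)
    qed
    have r8: "r \<le> 1/8" unfolding r_def by (rule real_le_lsqrt) (use u64 in \<open>simp_all add: power2_eq_square\<close>)
    have A3: "K + M \<ge> 3" using B by simp
    have "(K - 3) * (M - 3) \<ge> 0" using B by simp
    hence "(K + M - 3)^2 \<ge> K^2 + M^2 - 9" by (simp add: power2_eq_square algebra_simps)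
    moreover have "1 / r^2 = 2^s" using rr by (simp add: side_pow)
    ultimately have AN: "(K + M - 3)^2 \<ge> 1 / r^2 - 9" using B(3) by simp
    have WA: "w1 + w2 \<ge> (K + M - 2) * r^2" using B(4) rr by simp
    have "2 * r^2 + 2 * (2 * r^2 / (w1 + w2)) \<le> sqrt 2 * r^2 + 4 * r"
      by (rule num_large[OF r0 r8 A3 AN WA])
    thus ?thesis using rr by (simp add: r_def)
  qed
  finally show ?thesis .
qed

lemma box_expand: "real (i+1) * side s = real i * side s + side s"
  by (simp add: algebra_simps)

lemma box_facts: assumes "p \<in> grid_box s i j" "i < 2^s" "j < 2^s"
  shows "0 \<le> fst p" "fst p \<le> 1" "0 \<le> snd p" "snd p \<le> 1"
proof -
  have b: "real i * side s \<le> fst p" "fst p \<le> real (i+1) * side s"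
      "real j * side s \<le> snd p" "snd p \<le> real (j+1) * side s"
    using assms(1) unfolding box_mem by auto
  have "0 \<le> real i * side s" "0 \<le> real j * side s" using side_pos[of s] by auto
  thus "0 \<le> fst p" "0 \<le> snd p" using b by linarith+
  show "fst p \<le> 1" using b box_le1[OF assms(2)] by linarith
  show "snd p \<le> 1" using b box_le1[OF assms(3)] by linarith
qed

lemma box_close: assumes "p \<in> grid_box s i j" "p' \<in> grid_box s i j"
  shows "\<bar>fst p - fst p'\<bar> \<le> side s" "\<bar>snd p - snd p'\<bar> \<le> side s"
proof -
  have b: "real i * side s \<le> fst p" "fst p \<le> real i * side s + side s"
      "real j * side s \<le> snd p" "snd p \<le> real j * side s + side s"
      "real i * side s \<le> fst p'" "fst p' \<le> real i * side s + side s"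
      "real j * side s \<le> snd p'" "snd p' \<le> real j * side s + side s"
    using assms unfolding box_mem box_expand by auto
  thus "\<bar>fst p - fst p'\<bar> \<le> side s" "\<bar>snd p - snd p'\<bar> \<le> side s"
    unfolding abs_le_iff by linarith+
qed

lemma box_diff: assumes "p \<in> grid_box s i1 j1" "q \<in> grid_box s i2 j2"
  shows "fst q - fst p \<ge> (real i2 - real i1 - 1) * side s"
    "snd q - snd p \<ge> (real j2 - real j1 - 1) * side s"
proof -
  have b: "fst p \<le> real i1 * side s + side s" "snd p \<le> real j1 * side s + side s"
      "real i2 * side s \<le> fst q" "real j2 * side s \<le> snd q"
    using assms unfolding box_mem box_expand by auto
  have e: "(real i2 - real i1 - 1) * side s = real i2 * side s - (real i1 * side s + side s)"
    "(real j2 - real j1 - 1) * side s = real j2 * side s - (real j1 * side s + side s)"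
    by (simp_all add: algebra_simps)
  show "fst q - fst p \<ge> (real i2 - real i1 - 1) * side s"
    "snd q - snd p \<ge> (real j2 - real j1 - 1) * side s" unfolding e using b by linarith+
qed

lemma box_dd: assumes "p \<in> grid_box s i1 j1" "q \<in> grid_box s i2 j2"
    "p' \<in> grid_box s i1 j1" "q' \<in> grid_box s i2 j2"
  shows "\<bar>(fst q - fst p) - (fst q' - fst p')\<bar> \<le> 2 * side s"
    "\<bar>(snd q - snd p) - (snd q' - snd p')\<bar> \<le> 2 * side s"
  using box_close[OF assms(1,3)] box_close[OF assms(2,4)] unfolding abs_le_iff by linarith+

lemma lam_ff: assumes "inLc b a" "z \<in> lineof b a" "x \<in> lineof b a" "y \<in> lineof b a"
  "fst y - fst x \<ge> 0" "snd y - snd x \<ge> 0" "(fst y - fst x) + (snd y - snd x) > 0"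
  shows "lam b a z = (fst z + snd z) * ff (fst y - fst x) (snd y - snd x)"
  using lam_eq[OF assms(1,2)] dir_eq[OF assms(1,3-7)] by (simp add: divide_inverse)

lemma part1:
  assumes i: "i1 < 2^s" "j1 < 2^s" "i2 < 2^s" "j2 < 2^s" and g: "good_pair s i1 j1 i2 j2"
    and bx: "p \<in> grid_box s i1 j1" "q \<in> grid_box s i2 j2" "p' \<in> grid_box s i1 j1" "q' \<in> grid_box s i2 j2"
    and pq: "pless p q" "pless p' q'"
    and l: "inL b a" "p \<in> lineof b a" "q \<in> lineof b a"
    and l': "inL b' a'" "p' \<in> lineof b' a'" "q' \<in> lineof b' a'"
  shows "\<bar>lam b a p - lam b' a' p'\<bar> \<le> sqrt 2 * side s + 4 * sqrt (side s)"
    "\<bar>lam b a q - lam b' a' q'\<bar> \<le> sqrt 2 * side s + 4 * sqrt (side s)"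
proof -
  have s3: "s \<ge> 3" by (rule good_s3[OF g])
  define v1 where "v1 = fst q - fst p"
  define v2 where "v2 = snd q - snd p"
  define w1 where "w1 = fst q' - fst p'"
  define w2 where "w2 = snd q' - snd p'"
  have v: "v1 \<ge> 0" "v2 \<ge> 0" "v1 + v2 > 0" using pq(1) by (auto simp: pless_def v1_def v2_def)
  have w: "w1 \<ge> 0" "w2 \<ge> 0" "w1 + w2 > 0" using pq(2) by (auto simp: pless_def w1_def w2_def)
  have d: "\<bar>v1 - w1\<bar> \<le> 2 * side s" "\<bar>v2 - w2\<bar> \<le> 2 * side s"
    unfolding v1_def v2_def w1_def w2_def by (rule box_dd[OF bx])+
  define K where "K = real i2 - real i1"
  define M where "M = real j2 - real j1"
  have big: "s \<ge> 6 \<Longrightarrow> 3 \<le> K \<and> 3 \<le> M \<and> 2^s \<le> K^2 + M^2 \<and> (K + M - 2) * side s \<le> w1 + w2"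
  proof -
    assume s6: "s \<ge> 6"
    have "w1 \<ge> (K - 1) * side s" "w2 \<ge> (M - 1) * side s"
      using box_diff[OF bx(3,4)] by (auto simp: K_def M_def w1_def w2_def)
    hence "(K + M - 2) * side s \<le> w1 + w2" by (simp add: algebra_simps)
    thus ?thesis using good_min3[OF g s6] good_basic(3)[OF g] by (simp add: K_def M_def)
  qed
  have lp: "lam b a p = (fst p + snd p) * ff v1 v2" "lam b a q = (fst q + snd q) * ff v1 v2"
    using lam_ff[OF inL_inLc[OF l(1)] l(2) l(2) l(3)] lam_ff[OF inL_inLc[OF l(1)] l(3) l(2) l(3)] v
    by (auto simp: v1_def v2_def)
  have lp': "lam b' a' p' = (fst p' + snd p') * ff w1 w2" "lam b' a' q' = (fst q' + snd q') * ff w1 w2"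
    using lam_ff[OF inL_inLc[OF l'(1)] l'(2) l'(2) l'(3)] lam_ff[OF inL_inLc[OF l'(1)] l'(3) l'(2) l'(3)] w
    by (auto simp: w1_def w2_def)
  have bp': "0 \<le> fst p' + snd p'" "fst p' + snd p' \<le> 2" using box_facts[OF bx(3) i(1,2)] by auto
  have bq': "0 \<le> fst q' + snd q'" "fst q' + snd q' \<le> 2" using box_facts[OF bx(4) i(3,4)] by auto
  have dp: "\<bar>(fst p + snd p) - (fst p' + snd p')\<bar> \<le> 2 * side s"
    using box_close[OF bx(1,3)] unfolding abs_le_iff by linarith
  have dq: "\<bar>(fst q + snd q) - (fst q' + snd q')\<bar> \<le> 2 * side s"
    using box_close[OF bx(2,4)] unfolding abs_le_iff by linarith
  show "\<bar>lam b a p - lam b' a' p'\<bar> \<le> sqrt 2 * side s + 4 * sqrt (side s)"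
    unfolding lp lp' by (rule core_bound[OF s3 dp bp' v w d big])
  show "\<bar>lam b a q - lam b' a' q'\<bar> \<le> sqrt 2 * side s + 4 * sqrt (side s)"
    unfolding lp lp' by (rule core_bound[OF s3 dq bq' v w d big])
qed

lemma center_in: "center s i j \<in> grid_box s i j"
  using side_pos[of s] unfolding box_mem by (simp add: center_def algebra_simps)

lemma lam_range: assumes "inLc b a" "z \<in> lineof b a" "0 \<le> fst z + snd z" "fst z + snd z \<le> 2"
  shows "0 \<le> lam b a z" "lam b a z \<le> 2"
proof -
  have S: "fst a + snd a \<ge> 1" using inLc_sum(1)[OF assms(1)] .
  have l: "lam b a z = (fst z + snd z) / (fst a + snd a)" by (rule lam_eq[OF assms(1,2)])
  show "0 \<le> lam b a z" unfolding l using S assms(3) by simp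
  have "(fst z + snd z) / (fst a + snd a) \<le> (fst z + snd z) / 1"
    using S assms(3) by (intro divide_left_mono) auto
  thus "lam b a z \<le> 2" unfolding l using assms(4) by simp
qed

lemma elem_bound:
  assumes i: "i1 < 2^s" "j1 < 2^s" "i2 < 2^s" "j2 < 2^s" and g: "good_pair s i1 j1 i2 j2"
    and tr: "traverses (grid_box s i1 j1) (grid_box s i2 j2) b a"
    and pl: "p \<in> lineof b a"
    and pc: "(p \<in> grid_box s i1 j1 \<and> c = center s i1 j1) \<or> (p \<in> grid_box s i2 j2 \<and> c = center s i2 j2)"
    and lc: "inLc bc ac" "center s i1 j1 \<in> lineof bc ac" "center s i2 j2 \<in> lineof bc ac"
  shows "\<bar>lam b a p - lam bc ac c\<bar> \<le> 12 * sqrt (side s)"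
proof -
  have s3: "s \<ge> 3" by (rule good_s3[OF g])
  have iL: "inLc b a" using tr by (simp add: traverses_def inL_inLc)
  have cl: "c \<in> lineof bc ac" using pc lc by auto
  have Pr: "0 \<le> fst p + snd p" "fst p + snd p \<le> 2"
    using pc box_facts[of p s i1 j1] box_facts[of p s i2 j2] i by auto
  have Cr: "0 \<le> fst c + snd c" "fst c + snd c \<le> 2"
    using pc box_facts[OF center_in[of s i1 j1]] box_facts[OF center_in[of s i2 j2]] i by auto
  have dPC: "\<bar>(fst p + snd p) - (fst c + snd c)\<bar> \<le> 2 * side s"
    using pc box_close[OF _ center_in[of s i1 j1]] box_close[OF _ center_in[of s i2 j2]]
    unfolding abs_le_iff by (smt (verit))
  show ?thesis
  proof (cases "s \<le> 5")
    case True
    have "\<bar>lam b a p - lam bc ac c\<bar> \<le> 2"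
      using lam_range[OF iL pl Pr] lam_range[OF lc(1) cl Cr] by (simp add: abs_le_iff)
    also have "2 \<le> 12 * sqrt (side s)"
    proof (rule num_small2)
      have "(2::real)^s \<le> 2^5" using True by (intro power_increasing) auto
      thus "1/32 \<le> side s" by (simp add: side_pow divide_simps)
    qed
    finally show ?thesis .
  next
    case False
    hence s6: "s \<ge> 6" by simp
    define K where "K = real i2 - real i1"
    define M where "M = real j2 - real j1"
    have KM: "3 \<le> K" "3 \<le> M" using good_min3[OF g s6] by (auto simp: K_def M_def)
    have KM2: "2^s \<le> K^2 + M^2" using good_basic(3)[OF g] by (simp add: K_def M_def)
    obtain X where X: "X \<in> lineof b a" "X \<in> grid_box s i1 j1" using tr by (auto simp: traverses_def)
    obtain Y where Y: "Y \<in> lineof b a" "Y \<in> grid_box s i2 j2" using tr by (auto simp: traverses_def)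
    define v1 where "v1 = fst Y - fst X"
    define v2 where "v2 = snd Y - snd X"
    define w1 where "w1 = fst (center s i2 j2) - fst (center s i1 j1)"
    define w2 where "w2 = snd (center s i2 j2) - snd (center s i1 j1)"
    have u0: "side s > 0" by (rule side_pos)
    have "v1 \<ge> (K - 1) * side s" "v2 \<ge> (M - 1) * side s"
      using box_diff[OF X(2) Y(2)] by (simp_all add: v1_def v2_def K_def M_def)
    moreover have "(K - 1) * side s > 0" "(M - 1) * side s > 0" using KM u0 by simp_all
    ultimately have v: "v1 \<ge> 0" "v2 \<ge> 0" "v1 + v2 > 0" by linarith+
    have we: "w1 = K * side s" "w2 = M * side s"
      by (simp_all add: w1_def w2_def K_def M_def center_def algebra_simps)
    have wp: "w1 > 0" "w2 > 0" using KM u0 unfolding we by simp_all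
    hence w: "w1 \<ge> 0" "w2 \<ge> 0" "w1 + w2 > 0" by simp_all
    have d: "\<bar>v1 - w1\<bar> \<le> 2 * side s" "\<bar>v2 - w2\<bar> \<le> 2 * side s"
      unfolding v1_def v2_def w1_def w2_def
      by (rule box_dd[OF X(2) Y(2) center_in center_in])+
    have big: "s \<ge> 6 \<Longrightarrow> 3 \<le> K \<and> 3 \<le> M \<and> 2^s \<le> K^2 + M^2 \<and> (K + M - 2) * side s \<le> w1 + w2"
      using KM KM2 u0 unfolding we by (simp add: algebra_simps)
    have lp: "lam b a p = (fst p + snd p) * ff v1 v2"
      using lam_ff[OF iL pl X(1) Y(1)] v by (simp add: v1_def v2_def)
    have lcc: "lam bc ac c = (fst c + snd c) * ff w1 w2"
      using lam_ff[OF lc(1) cl lc(2) lc(3)] w by (simp add: w1_def w2_def)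
    have "\<bar>lam b a p - lam bc ac c\<bar> \<le> sqrt 2 * side s + 4 * sqrt (side s)"
      unfolding lp lcc by (rule core_bound[OF s3 dPC Cr v w d big])
    also have "\<dots> \<le> 12 * sqrt (side s)"
    proof -
      have u1: "side s \<le> 1" using u0 by (simp add: side_pow)
      have "side s \<le> sqrt (side s)" by (rule real_le_rsqrt) (use u0 u1 in \<open>simp add: power2_eq_square mult_le_one\<close>)
      moreover have "sqrt 2 \<le> 8" using sqrt2_bounds(2) by simp
      ultimately have "sqrt 2 * side s \<le> 8 * sqrt (side s)" using u0 by (intro mult_mono) auto
      thus ?thesis by simp
    qed
    finally show ?thesis .
  qed
qed

lemma in_lineof: "c = b + t *\<^sub>R a \<Longrightarrow> c \<in> lineof b a"
  unfolding lineof_def by (rule image_eqI[where x = t]) auto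

lemma lc_exists: assumes g: "good_pair s i1 j1 i2 j2"
  shows "\<exists>bc ac. inLc bc ac \<and> center s i1 j1 \<in> lineof bc ac \<and> center s i2 j2 \<in> lineof bc ac"
proof -
  define c1 where "c1 = center s i1 j1"
  define c2 where "c2 = center s i2 j2"
  define d where "d = c2 - c1"
  have u0: "side s > 0" by (rule side_pos)
  have ij: "i1 \<le> i2" "j1 \<le> j2" using good_basic(1,2)[OF g] by auto
  have KM: "2^s \<le> (real i2 - real i1)^2 + (real j2 - real j1)^2" using good_basic(3)[OF g] .
  have de: "fst d = (real i2 - real i1) * side s" "snd d = (real j2 - real j1) * side s"
    by (simp_all add: d_def c1_def c2_def center_def algebra_simps)
  have d0: "fst d \<ge> 0" "snd d \<ge> 0" unfolding de using ij u0 by simp_all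
  have dpos: "fst d + snd d > 0"
  proof (rule ccontr)
    assume "\<not> fst d + snd d > 0"
    hence "fst d = 0" "snd d = 0" using d0 by linarith+
    hence "real i2 - real i1 = 0" "real j2 - real j1 = 0" unfolding de using u0 by simp_all
    hence "(real i2 - real i1)^2 + (real j2 - real j1)^2 = 0" by simp
    moreover have "(2::real)^s > 0" by simp
    ultimately show False using KM by linarith
  qed
  define nd where "nd = norm d"
  have nd0: "nd > 0" unfolding nd_def using dpos by auto
  define ac where "ac = (1 / nd) *\<^sub>R d"
  define Sa where "Sa = fst ac + snd ac"
  have Sa0: "Sa > 0" unfolding Sa_def ac_def using dpos nd0 by (simp add: add_divide_distrib[symmetric])
  define lc where "lc = (fst c1 + snd c1) / Sa"
  define bc where "bc = c1 - lc *\<^sub>R ac"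
  have "inLc bc ac"
    unfolding inLc_def
  proof (intro conjI)
    have "lc * Sa = fst c1 + snd c1" unfolding lc_def using Sa0 by simp
    thus "fst bc = - snd bc" unfolding bc_def Sa_def by (simp add: algebra_simps)
    show "norm ac = 1" unfolding ac_def nd_def using nd0 nd_def by simp
    show "0 \<le> fst ac" "0 \<le> snd ac" unfolding ac_def using d0 nd0 by simp_all
  qed
  moreover have "c1 \<in> lineof bc ac" by (rule in_lineof[where t = lc]) (simp add: bc_def)
  moreover have "c2 \<in> lineof bc ac"
  proof (rule in_lineof[where t = "lc + nd"])
    have "nd *\<^sub>R ac = d" unfolding ac_def using nd0 by simp
    thus "c2 = bc + (lc + nd) *\<^sub>R ac" unfolding bc_def d_def by (simp add: algebra_simps scaleR_add_left)
  qed
  ultimately show ?thesis unfolding c1_def c2_def by blast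
qed

lemma lpart_bound:
  assumes i: "i1 < 2^s" "j1 < 2^s" "i2 < 2^s" "j2 < 2^s" and g: "good_pair s i1 j1 i2 j2"
    and Bc: "(B = grid_box s i1 j1 \<and> c = center s i1 j1) \<or> (B = grid_box s i2 j2 \<and> c = center s i2 j2)"
  shows "Lpart (grid_box s i1 j1) (grid_box s i2 j2) (center s i1 j1) (center s i2 j2) B c \<le> 12 * sqrt (side s)"
  unfolding Lpart_def
proof (rule cSup_least)
  obtain b a where tr: "traverses (grid_box s i1 j1) (grid_box s i2 j2) b a"
    using good_basic(4)[OF g] by blast
  obtain p where p: "p \<in> lineof b a \<inter> B" using tr Bc by (auto simp: traverses_def)
  obtain bc ac where lc: "inLc bc ac" "center s i1 j1 \<in> lineof bc ac" "center s i2 j2 \<in> lineof bc ac"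
    using lc_exists[OF g] by blast
  show "{\<bar>lam b a p - lam bc ac c\<bar> | b a p bc ac. traverses (grid_box s i1 j1) (grid_box s i2 j2) b a \<and>
      p \<in> lineof b a \<inter> B \<and> inLc bc ac \<and> center s i1 j1 \<in> lineof bc ac \<and> center s i2 j2 \<in> lineof bc ac} \<noteq> {}"
    using tr p lc by blast
next
  fix x assume "x \<in> {\<bar>lam b a p - lam bc ac c\<bar> | b a p bc ac. traverses (grid_box s i1 j1) (grid_box s i2 j2) b a \<and>
      p \<in> lineof b a \<inter> B \<and> inLc bc ac \<and> center s i1 j1 \<in> lineof bc ac \<and> center s i2 j2 \<in> lineof bc ac}"
  then obtain b a p bc ac where x: "x = \<bar>lam b a p - lam bc ac c\<bar>"
    and tr: "traverses (grid_box s i1 j1) (grid_box s i2 j2) b a" and p: "p \<in> lineof b a" "p \<in> B"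
    and lc: "inLc bc ac" "center s i1 j1 \<in> lineof bc ac" "center s i2 j2 \<in> lineof bc ac"
    by blast
  have pc: "(p \<in> grid_box s i1 j1 \<and> c = center s i1 j1) \<or> (p \<in> grid_box s i2 j2 \<and> c = center s i2 j2)"
    using Bc p(2) by blast
  show "x \<le> 12 * sqrt (side s)" unfolding x by (rule elem_bound[OF i g tr p(1) pc lc])
qed

theorem lemma9:
  shows "(\<forall>s i1 j1 i2 j2 p q p' q' b a b' a'.
            i1 < 2^s \<and> j1 < 2^s \<and> i2 < 2^s \<and> j2 < 2^s \<and> good_pair s i1 j1 i2 j2 \<and>
            p \<in> grid_box s i1 j1 \<and> q \<in> grid_box s i2 j2 \<and>
            p' \<in> grid_box s i1 j1 \<and> q' \<in> grid_box s i2 j2 \<and>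
            pless p q \<and> pless p' q' \<and>
            inL b a \<and> p \<in> lineof b a \<and> q \<in> lineof b a \<and>
            inL b' a' \<and> p' \<in> lineof b' a' \<and> q' \<in> lineof b' a' \<longrightarrow>
              \<bar>lam b a p - lam b' a' p'\<bar> \<le> sqrt 2 * side s + 4 * sqrt (side s) \<and>
              \<bar>lam b a q - lam b' a' q'\<bar> \<le> sqrt 2 * side s + 4 * sqrt (side s))
         \<and> (\<exists>C. \<forall>s i1 j1 i2 j2.
            i1 < 2^s \<and> j1 < 2^s \<and> i2 < 2^s \<and> j2 < 2^s \<and> good_pair s i1 j1 i2 j2 \<longrightarrow>
              Lval s i1 j1 i2 j2 \<le> C * sqrt (side s))"
proof (intro conjI allI impI)
  fix s i1 j1 i2 j2 p q p' q' b a b' a'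
  assume H: "i1 < 2^s \<and> j1 < 2^s \<and> i2 < 2^s \<and> j2 < 2^s \<and> good_pair s i1 j1 i2 j2 \<and>
            p \<in> grid_box s i1 j1 \<and> q \<in> grid_box s i2 j2 \<and>
            p' \<in> grid_box s i1 j1 \<and> q' \<in> grid_box s i2 j2 \<and>
            pless p q \<and> pless p' q' \<and>
            inL b a \<and> p \<in> lineof b a \<and> q \<in> lineof b a \<and>
            inL b' a' \<and> p' \<in> lineof b' a' \<and> q' \<in> lineof b' a'"
  show "\<bar>lam b a p - lam b' a' p'\<bar> \<le> sqrt 2 * side s + 4 * sqrt (side s)"
    using part1(1)[of i1 s j1 i2 j2 p q p' q' b a b' a'] H by blast
  show "\<bar>lam b a q - lam b' a' q'\<bar> \<le> sqrt 2 * side s + 4 * sqrt (side s)"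
    using part1(2)[of i1 s j1 i2 j2 p q p' q' b a b' a'] H by blast
next
  show "\<exists>C. \<forall>s i1 j1 i2 j2.
            i1 < 2^s \<and> j1 < 2^s \<and> i2 < 2^s \<and> j2 < 2^s \<and> good_pair s i1 j1 i2 j2 \<longrightarrow>
              Lval s i1 j1 i2 j2 \<le> C * sqrt (side s)"
  proof (intro exI allI impI)
    fix s i1 j1 i2 j2
    assume H: "i1 < 2^s \<and> j1 < 2^s \<and> i2 < 2^s \<and> j2 < 2^s \<and> good_pair s i1 j1 i2 j2"
    hence i: "i1 < 2^s" "j1 < 2^s" "i2 < 2^s" "j2 < 2^s" and g: "good_pair s i1 j1 i2 j2" by auto
    show "Lval s i1 j1 i2 j2 \<le> 12 * sqrt (side s)"
      unfolding Lval_def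
      using lpart_bound[OF i g, of "grid_box s i1 j1" "center s i1 j1"]
        lpart_bound[OF i g, of "grid_box s i2 j2" "center s i2 j2"] by simp
  qed
qed

end
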